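(* Let $p\in\mathbb{C}\setminus\{0\}$ and let $\mathcal{B}(p)$ be the Lie conformal algebra which is a free $\mathbb{C}[\partial]$-module with basis $\{L_i\mid i\in\mathbb{Z}_+\}$ and $\lambda$-brackets $[L_i\,{}_\lambda\,L_j]=((i+p)\partial+(i+j+2p)\lambda)L_{i+j}$. Put $L_{i,m}=(L_i)_{(m+1)}$ for $i\in\mathbb{Z}_+$, $m\in\mathbb{Z}_{\ge -1}$. Then: (1) The annihilation algebra $\mathcal{A}(\mathcal{B}(p))$ is spanned over $\mathbb{C}$ by $\{L_{i,m}\mid i\in\mathbb{Z}_+,\ m\in\mathbb{Z}_{\ge-1}\}$ with relations $[L_{i,m},L_{j,n}]=((j+p)(m+1)-(i+p)(n+1))L_{i+j,m+n}$. (2) The extended annihilation algebra $\mathcal{A}(\mathcal{B}(p))^e$ is spanned over $\mathbb{C}$ by $\{L_{i,m},T\mid i\in\mathbb{Z}_+,\ m\in\mathbb{Z}_{\ge-1}\}$ with the relations in (1) and $[T,L_{i,m}]=-(m+1)L_{i,m-1}$.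
   Context: $\mathbb{Z}_+=\{0,1,2,\dots\}$. A Lie conformal algebra $R$ is a $\mathbb{C}[\partial]$-module with a $\mathbb{C}$-linear $\lambda$-bracket $R\otimes R\to\mathbb{C}[\lambda]\otimes R$ satisfying conformal sesquilinearity $[\partial a\,{}_\lambda\,b]=-\lambda[a\,{}_\lambda\,b]$, $[a\,{}_\lambda\,\partial b]=(\partial+\lambda)[a\,{}_\lambda\,b]$, skew-symmetry $[a\,{}_\lambda\,b]=-[b\,{}_{-\lambda-\partial}\,a]$, and the Jacobi identity $[a\,{}_\lambda\,[b\,{}_\mu\,c]]=[[a\,{}_\lambda\,b]\,{}_{\lambda+\mu}\,c]+[b\,{}_\mu\,[a\,{}_\lambda\,c]]$. Writing $[a\,{}_\lambda\,b]=\sum_{k\in\mathbb{Z}_+}\frac{\lambda^k}{k!}a_{(k)}b$, the annihilation algebra $\mathcal{A}(R)$ is the Lie algebra spanned by symbols $a_{(n)}$ ($a\in R$, $n\in\mathbb{Z}_+$), linear in $a$, with relations $[a_{(m)},b_{(n)}]=\sum_{k\in\mathbb{Z}_+}\binom{m}{k}(a_{(k)}b)_{(m+n-k)}$ and $(\partial a)_{(n)}=-na_{(n-1)}$. The extended annihilation algebra is $\mathcal{A}(R)^e=\mathbb{C}T\ltimes\mathcal{A}(R)$ with $[T,a_{(n)}]=-na_{(n-1)}$. *)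

theory Defs
  imports Complex_Main "HOL-Computational_Algebra.Polynomial"
begin

text \<open>An element of the free C[d]-module with basis
  L_0, L_1, ... is represented by a finitely supported function
  a :: nat => complex poly, where a i is the polynomial f(d) with the summand f(d) L_i.\<close>

type_synonym Bel = "nat \<Rightarrow> complex poly"

definition Bset :: "Bel set" where
  "Bset = {a. finite {i. a i \<noteq> 0}}"

definition Badd :: "Bel \<Rightarrow> Bel \<Rightarrow> Bel" where
  "Badd a b = (\<lambda>i. a i + b i)"

definition Bscale :: "complex \<Rightarrow> Bel \<Rightarrow> Bel" where
  "Bscale c a = (\<lambda>i. smult c (a i))"

definition Bder :: "Bel \<Rightarrow> Bel" where
  "Bder a = (\<lambda>i. [:0, 1:] * a i)"

definition Lb :: "nat \<Rightarrow> Bel" where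
  "Lb i = (\<lambda>j. if j = i then 1 else 0)"

text \<open>A coefficient is an element of
  (C[d])[lambda], i.e. of type complex poly poly, outer variable lambda, inner variable d.
  By conformal sesquilinearity,
  [f(d) L_i _lambda g(d) L_j] = f(-lambda) g(lambda+d) ((i+p) d + (i+j+2p) lambda) L_(i+j).\<close>
definition lam_term :: "complex \<Rightarrow> nat \<Rightarrow> nat \<Rightarrow> complex poly \<Rightarrow> complex poly \<Rightarrow> complex poly poly" where
  "lam_term p i j f g =
     map_poly (\<lambda>c. [:c:]) (pcompose f [:0, -1:])
     * pcompose (map_poly (\<lambda>c. [:c:]) g) [:[:0, 1:], 1:]
     * [: [:0, of_nat i + p:], [:of_nat (i + j) + 2 * p:] :]"

definition lam_bracket :: "complex \<Rightarrow> Bel \<Rightarrow> Bel \<Rightarrow> nat \<Rightarrow> complex poly poly" where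
  "lam_bracket p a b n = (\<Sum>i\<le>n. lam_term p i (n - i) (a i) (b (n - i)))"

text \<open>the k-th product a_(k) b, from [a _lambda b] = sum_k lambda^k/k! a_(k) b\<close>
definition nprod :: "complex \<Rightarrow> nat \<Rightarrow> Bel \<Rightarrow> Bel \<Rightarrow> Bel" where
  "nprod p k a b = (\<lambda>n. smult (fact k) (coeff (lam_bracket p a b n) k))"

definition lie_algebra :: "(complex \<Rightarrow> 'g::ab_group_add \<Rightarrow> 'g) \<Rightarrow> ('g \<Rightarrow> 'g \<Rightarrow> 'g) \<Rightarrow> bool" where
  "lie_algebra sc br \<longleftrightarrow>
     vector_space sc
     \<and> (\<forall>x y z. br (x + y) z = br x z + br y z)
     \<and> (\<forall>c x y. br (sc c x) y = sc c (br x y))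
     \<and> (\<forall>x. br x x = 0)
     \<and> (\<forall>x y z. br x (br y z) + br y (br z x) + br z (br x y) = 0)"

text \<open>The defining relations of the annihilation algebra A(B(p)): phi a n stands for the
  symbol a_(n); it is linear in a, satisfies (d a)_(n) = -n a_(n-1), and the commutator
  formula.\<close>
definition ann_relations ::
  "complex \<Rightarrow> (complex \<Rightarrow> 'g::ab_group_add \<Rightarrow> 'g) \<Rightarrow> ('g \<Rightarrow> 'g \<Rightarrow> 'g) \<Rightarrow> (Bel \<Rightarrow> nat \<Rightarrow> 'g) \<Rightarrow> bool" where
  "ann_relations p sc br \<phi> \<longleftrightarrow>
     lie_algebra sc br
     \<and> (\<forall>a\<in>Bset. \<forall>b\<in>Bset. \<forall>n. \<phi> (Badd a b) n = \<phi> a n + \<phi> b n)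
     \<and> (\<forall>c. \<forall>a\<in>Bset. \<forall>n. \<phi> (Bscale c a) n = sc c (\<phi> a n))
     \<and> (\<forall>a\<in>Bset. \<forall>n. \<phi> (Bder a) n = sc (- of_nat n) (\<phi> a (n - 1)))
     \<and> (\<forall>a\<in>Bset. \<forall>b\<in>Bset. \<forall>m n.
           br (\<phi> a m) (\<phi> b n) = (\<Sum>k\<le>m. sc (of_nat (m choose k)) (\<phi> (nprod p k a b) (m + n - k))))"

definition is_ann_algebra ::
  "complex \<Rightarrow> (complex \<Rightarrow> 'g::ab_group_add \<Rightarrow> 'g) \<Rightarrow> ('g \<Rightarrow> 'g \<Rightarrow> 'g) \<Rightarrow> (Bel \<Rightarrow> nat \<Rightarrow> 'g) \<Rightarrow> bool" where
  "is_ann_algebra p sc br \<phi> \<longleftrightarrow>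
     ann_relations p sc br \<phi> \<and> module.span sc {\<phi> a n |a n. a \<in> Bset} = UNIV"

definition is_ext_ann_algebra ::
  "complex \<Rightarrow> (complex \<Rightarrow> 'g::ab_group_add \<Rightarrow> 'g) \<Rightarrow> ('g \<Rightarrow> 'g \<Rightarrow> 'g) \<Rightarrow> (Bel \<Rightarrow> nat \<Rightarrow> 'g) \<Rightarrow> 'g \<Rightarrow> bool" where
  "is_ext_ann_algebra p sc br \<phi> T \<longleftrightarrow>
     ann_relations p sc br \<phi>
     \<and> (\<forall>a\<in>Bset. \<forall>n. br T (\<phi> a n) = sc (- of_nat n) (\<phi> a (n - 1)))
     \<and> module.span sc (insert T {\<phi> a n |a n. a \<in> Bset}) = UNIV"

text \<open>L_(i,m) = (L_i)_(m+1) for m \<ge> -1 (m an integer).  For m < -1 the index is clamped to 0;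
  this only occurs in the formulas with coefficient 0.\<close>
definition Lim :: "(Bel \<Rightarrow> nat \<Rightarrow> 'g) \<Rightarrow> nat \<Rightarrow> int \<Rightarrow> 'g" where
  "Lim \<phi> i m = \<phi> (Lb i) (nat (m + 1))"

end

theory Submission
  imports Defs
begin

lemma lam_term_zero1: "lam_term p i j 0 g = 0"
  by (simp add: lam_term_def pcompose_1)

lemma lam_term_zero2: "lam_term p i j f 0 = 0"
  by (simp add: lam_term_def pcompose_1)

lemma lam_term_one: "lam_term p i j 1 1 = [: [:0, of_nat i + p:], [:of_nat (i + j) + 2 * p:] :]"
  by (simp add: lam_term_def pcompose_1)

lemma lb_bracket:
  "lam_bracket p (Lb i) (Lb j) n =
     (if n = i + j then [: [:0, of_nat i + p:], [:of_nat (i + j) + 2 * p:] :] else 0)"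
proof -
  have "lam_bracket p (Lb i) (Lb j) n =
     (\<Sum>i'\<le>n. if i' = i then (if n - i = j then [: [:0, of_nat i + p:], [:of_nat (i + j) + 2 * p:] :] else 0) else 0)"
    unfolding lam_bracket_def
    by (rule sum.cong) (auto simp: Lb_def lam_term_zero1 lam_term_zero2 lam_term_one)
  also have "\<dots> = (if n = i + j then [: [:0, of_nat i + p:], [:of_nat (i + j) + 2 * p:] :] else 0)"
    by (subst sum.delta) auto
  finally show ?thesis .
qed

lemma nprod0: "nprod p 0 (Lb i) (Lb j) = Bscale (of_nat i + p) (Bder (Lb (i + j)))"
  by (rule ext) (simp add: nprod_def lb_bracket Bscale_def Bder_def, simp add: Lb_def)

lemma nprod1: "nprod p 1 (Lb i) (Lb j) = Bscale (of_nat (i + j) + 2 * p) (Lb (i + j))"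
  by (rule ext) (simp add: nprod_def lb_bracket Bscale_def, simp add: Lb_def)

lemma nprod1': "nprod p (Suc 0) (Lb i) (Lb j) = Bscale (of_nat (i + j) + 2 * p) (Lb (i + j))"
  using nprod1 by simp

lemma nprod2: "k \<ge> 2 \<Longrightarrow> nprod p k (Lb i) (Lb j) = (\<lambda>n. 0)"
  by (rule ext) (auto simp: nprod_def lb_bracket coeff_pCons split: nat.split)

lemma Lb_Bset: "Lb i \<in> Bset"
  by (simp add: Bset_def Lb_def)

lemma Bder_Bset: "a \<in> Bset \<Longrightarrow> Bder a \<in> Bset"
  unfolding Bset_def Bder_def by (auto elim: finite_subset[rotated])

lemma Bscale_Bset: "a \<in> Bset \<Longrightarrow> Bscale c a \<in> Bset"
  unfolding Bset_def Bscale_def by (auto elim: finite_subset[rotated])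

lemma zero_Bset: "(\<lambda>n. 0) \<in> Bset"
  by (simp add: Bset_def)


locale annrel =
  fixes p :: complex and sc :: "complex \<Rightarrow> 'g::ab_group_add \<Rightarrow> 'g" and br :: "'g \<Rightarrow> 'g \<Rightarrow> 'g"
    and \<phi> :: "Bel \<Rightarrow> nat \<Rightarrow> 'g"
  assumes rel: "ann_relations p sc br \<phi>"
begin

lemma vs: "vector_space sc"
  using rel by (simp add: ann_relations_def lie_algebra_def)

interpretation V: vector_space sc by (rule vs)

lemma padd: "a \<in> Bset \<Longrightarrow> b \<in> Bset \<Longrightarrow> \<phi> (Badd a b) n = \<phi> a n + \<phi> b n"
  using rel by (simp add: ann_relations_def)
lemma pscale: "a \<in> Bset \<Longrightarrow> \<phi> (Bscale c a) n = sc c (\<phi> a n)"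
  using rel by (simp add: ann_relations_def)
lemma pder: "a \<in> Bset \<Longrightarrow> \<phi> (Bder a) n = sc (- of_nat n) (\<phi> a (n - 1))"
  using rel by (simp add: ann_relations_def)
lemma pbr: "a \<in> Bset \<Longrightarrow> b \<in> Bset \<Longrightarrow>
   br (\<phi> a m) (\<phi> b n) = (\<Sum>k\<le>m. sc (of_nat (m choose k)) (\<phi> (nprod p k a b) (m + n - k)))"
  using rel by (simp add: ann_relations_def)

lemma pzero: "\<phi> (\<lambda>n. 0) N = 0"
proof -
  have "Badd (\<lambda>n. 0) (\<lambda>n. 0) = (\<lambda>n. 0)" by (simp add: Badd_def)
  then have "\<phi> (\<lambda>n. 0) N = \<phi> (\<lambda>n. 0) N + \<phi> (\<lambda>n. 0) N"
    using padd[OF zero_Bset zero_Bset, of N] by simp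
  then show ?thesis by simp
qed

definition single :: "nat \<Rightarrow> complex poly \<Rightarrow> Bel" where
  "single i f = (\<lambda>j. if j = i then f else 0)"

lemma single_Bset: "single i f \<in> Bset"
proof -
  have "{j. (if j = i then f else 0) \<noteq> 0} \<subseteq> {i}" by auto
  then show ?thesis by (simp add: Bset_def single_def finite_subset)
qed

abbreviation "LS \<equiv> {\<phi> (Lb i) k |i k. True}"

lemma single_span: "\<forall>n. \<phi> (single i f) n \<in> V.span LS"
proof (induction f rule: pCons_induct)
  case 0
  have "single i 0 = (\<lambda>n. 0)" by (simp add: single_def fun_eq_iff)
  then show ?case by (simp add: pzero V.span_zero)
next
  case (pCons c f)
  have eq: "single i (pCons c f) = Badd (Bscale c (Lb i)) (Bder (single i f))"
    apply (rule ext)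
    subgoal for j by (cases "j = i") (simp_all add: single_def Badd_def Bscale_def Bder_def Lb_def)
    done
  show ?case
  proof
    fix n
    have "\<phi> (single i (pCons c f)) n = sc c (\<phi> (Lb i) n) + sc (- of_nat n) (\<phi> (single i f) (n - 1))"
      by (simp add: eq padd Bscale_Bset Bder_Bset Lb_Bset single_Bset pscale pder)
    also have "\<dots> \<in> V.span LS"
      using pCons.IH V.span_base[of "\<phi> (Lb i) n" LS] by (intro V.span_add V.span_scale) auto
    finally show "\<phi> (single i (pCons c f)) n \<in> V.span LS" .
  qed
qed

lemma restr_span:
  assumes "finite A"
  shows "\<forall>n. \<phi> (\<lambda>j. if j \<in> A then a j else 0) n \<in> V.span LS"
  using assms
proof (induction A rule: finite_induct)
  case empty
  then show ?case by (simp add: pzero V.span_zero)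
next
  case (insert x A)
  have B1: "(\<lambda>j. if j \<in> A then a j else 0) \<in> Bset"
  proof -
    have "{j. (if j \<in> A then a j else 0) \<noteq> 0} \<subseteq> A" by auto
    then show ?thesis using insert.hyps(1) by (simp add: Bset_def finite_subset)
  qed
  have eq: "(\<lambda>j. if j \<in> insert x A then a j else 0) = Badd (\<lambda>j. if j \<in> A then a j else 0) (single x (a x))"
    using insert.hyps by (auto simp: Badd_def single_def fun_eq_iff)
  show ?case
    using insert.IH single_span[of x "a x"]
    unfolding eq by (simp add: padd B1 single_Bset V.span_add)
qed

lemma all_span: assumes "a \<in> Bset" shows "\<phi> a n \<in> V.span LS"
proof -
  have f: "finite {i. a i \<noteq> 0}" using assms by (simp add: Bset_def)
  have e: "(\<lambda>j. if j \<in> {i. a i \<noteq> 0} then a j else 0) = a" by auto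
  have "\<phi> (\<lambda>j. if j \<in> {i. a i \<noteq> 0} then a j else 0) n \<in> V.span LS"
    using restr_span[OF f, of a] by blast
  then show ?thesis by (simp only: e)
qed

lemma span_LS: "V.span {\<phi> a n |a n. a \<in> Bset} \<subseteq> V.span LS"
proof (rule V.span_minimal)
  show "{\<phi> a n |a n. a \<in> Bset} \<subseteq> V.span LS" using all_span by blast
qed simp

lemma bracket_nat:
  "br (\<phi> (Lb i) m) (\<phi> (Lb j) n) =
     sc ((of_nat j + p) * of_nat m - (of_nat i + p) * of_nat n) (\<phi> (Lb (i + j)) (m + n - 1))"
proof -
  let ?f = "\<lambda>k. sc (of_nat (m choose k)) (\<phi> (nprod p k (Lb i) (Lb j)) (m + n - k))"
  have t0: "?f 0 = sc (- (of_nat i + p) * of_nat (m + n)) (\<phi> (Lb (i + j)) (m + n - 1))"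
    by (simp add: nprod0 pscale pder Bder_Bset Lb_Bset algebra_simps)
  have t1: "?f 1 = sc (of_nat m * (of_nat (i + j) + 2 * p)) (\<phi> (Lb (i + j)) (m + n - 1))"
    by (simp add: nprod1' pscale Lb_Bset)
  have t2: "?f k = 0" if "k \<ge> 2" for k
    using that by (simp add: nprod2 pzero)
  show ?thesis
  proof (cases "m = 0")
    case True
    have "br (\<phi> (Lb i) m) (\<phi> (Lb j) n) = ?f 0"
      by (simp only: pbr[OF Lb_Bset Lb_Bset] True atMost_0 sum.empty sum.insert_remove finite.emptyI) simp
    also have "\<dots> = sc ((of_nat j + p) * of_nat m - (of_nat i + p) * of_nat n) (\<phi> (Lb (i + j)) (m + n - 1))"
      unfolding t0 using True by (intro arg_cong[where f = "\<lambda>c. sc c _"]) (simp add: algebra_simps)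
    finally show ?thesis .
  next
    case False
    have U: "{..m} = {0, 1} \<union> {2..m}" using False by auto
    have z: "sum ?f {2..m} = 0" by (intro sum.neutral ballI t2) auto
    have "(\<Sum>k\<le>m. ?f k) = sum ?f {0, 1} + sum ?f {2..m}"
      unfolding U by (rule sum.union_disjoint) auto
    also have "\<dots> = ?f 0 + ?f 1" unfolding z by simp
    finally have "(\<Sum>k\<le>m. ?f k) = ?f 0 + ?f 1" .
    also have "\<dots> = sc ((of_nat j + p) * of_nat m - (of_nat i + p) * of_nat n) (\<phi> (Lb (i + j)) (m + n - 1))"
      unfolding t0 t1 V.scale_left_distrib[symmetric]
      by (rule arg_cong[where f = "\<lambda>c. sc c _"]) (simp add: algebra_simps)
    finally show ?thesis by (simp add: pbr Lb_Bset)
  qed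
qed

lemma bracket_Lim:
  assumes "m \<ge> -1" "n \<ge> -1"
  shows "br (Lim \<phi> i m) (Lim \<phi> j n)
             = sc ((of_nat j + p) * of_int (m + 1) - (of_nat i + p) * of_int (n + 1))
                  (Lim \<phi> (i + j) (m + n))"
proof -
  have a: "of_int (m + 1) = (of_nat (nat (m + 1)) :: complex)" "of_int (n + 1) = (of_nat (nat (n + 1)) :: complex)"
    using assms by simp_all
  have b: "nat (m + n + 1) = nat (m + 1) + nat (n + 1) - 1" using assms by linarith
  show ?thesis unfolding Lim_def a b by (rule bracket_nat)
qed

lemma span_Lim:
  "V.span {Lim \<phi> i m |i m. m \<ge> -1} = V.span LS"
proof -
  have "{Lim \<phi> i m |i m. m \<ge> -1} = LS"
  proof (auto simp: Lim_def)
    fix i k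
    show "\<exists>i' m. \<phi> (Lb i) k = \<phi> (Lb i') (nat (m + 1)) \<and> - 1 \<le> m"
      by (rule exI[of _ i], rule exI[of _ "int k - 1"]) auto
  qed
  then show ?thesis by simp
qed

end

theorem lemma2p5:
  fixes p :: complex
    and sc :: "complex \<Rightarrow> 'g::ab_group_add \<Rightarrow> 'g" and br :: "'g \<Rightarrow> 'g \<Rightarrow> 'g"
    and \<phi> :: "Bel \<Rightarrow> nat \<Rightarrow> 'g"
    and sc' :: "complex \<Rightarrow> 'h::ab_group_add \<Rightarrow> 'h" and br' :: "'h \<Rightarrow> 'h \<Rightarrow> 'h"
    and \<psi> :: "Bel \<Rightarrow> nat \<Rightarrow> 'h" and T :: 'h
  assumes "p \<noteq> 0"
  shows
    "(is_ann_algebra p sc br \<phi> \<longrightarrow>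
        module.span sc {Lim \<phi> i m |i m. m \<ge> -1} = UNIV
      \<and> (\<forall>i j. \<forall>m n::int. m \<ge> -1 \<longrightarrow> n \<ge> -1 \<longrightarrow>
           br (Lim \<phi> i m) (Lim \<phi> j n)
             = sc ((of_nat j + p) * of_int (m + 1) - (of_nat i + p) * of_int (n + 1))
                  (Lim \<phi> (i + j) (m + n))))
   \<and> (is_ext_ann_algebra p sc' br' \<psi> T \<longrightarrow>
        module.span sc' (insert T {Lim \<psi> i m |i m. m \<ge> -1}) = UNIV
      \<and> (\<forall>i j. \<forall>m n::int. m \<ge> -1 \<longrightarrow> n \<ge> -1 \<longrightarrow>
           br' (Lim \<psi> i m) (Lim \<psi> j n)
             = sc' ((of_nat j + p) * of_int (m + 1) - (of_nat i + p) * of_int (n + 1))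
                   (Lim \<psi> (i + j) (m + n)))
      \<and> (\<forall>i. \<forall>m::int. m \<ge> -1 \<longrightarrow>
           br' T (Lim \<psi> i m) = sc' (- of_int (m + 1)) (Lim \<psi> i (m - 1))))"
proof (intro conjI impI allI)
  assume H: "is_ann_algebra p sc br \<phi>"
  then interpret A: annrel p sc br \<phi> by unfold_locales (simp add: is_ann_algebra_def)
  interpret V: vector_space sc by (rule A.vs)
  have "UNIV = V.span {\<phi> a n |a n. a \<in> Bset}" using H by (simp add: is_ann_algebra_def)
  also have "\<dots> \<subseteq> V.span {Lim \<phi> i m |i m. m \<ge> -1}" using A.span_LS A.span_Lim by simp
  finally show "V.span {Lim \<phi> i m |i m. m \<ge> -1} = UNIV" by blast
  fix i j and m n :: int
  assume "m \<ge> -1" "n \<ge> -1"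
  then show "br (Lim \<phi> i m) (Lim \<phi> j n)
             = sc ((of_nat j + p) * of_int (m + 1) - (of_nat i + p) * of_int (n + 1))
                  (Lim \<phi> (i + j) (m + n))" by (rule A.bracket_Lim)
next
  assume H: "is_ext_ann_algebra p sc' br' \<psi> T"
  interpret A: annrel p sc' br' \<psi> using H(1) unfolding is_ext_ann_algebra_def by (intro annrel.intro) blast
  interpret V: vector_space sc' by (rule A.vs)
  have "UNIV = V.span (insert T {\<psi> a n |a n. a \<in> Bset})" using H unfolding is_ext_ann_algebra_def by simp
  also have "\<dots> \<subseteq> V.span (insert T {Lim \<psi> i m |i m. m \<ge> -1})"
  proof (rule V.span_minimal)
    show "insert T {\<psi> a n |a n. a \<in> Bset} \<subseteq> V.span (insert T {Lim \<psi> i m |i m. m \<ge> -1})"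
    proof
      fix x assume "x \<in> insert T {\<psi> a n |a n. a \<in> Bset}"
      then show "x \<in> V.span (insert T {Lim \<psi> i m |i m. m \<ge> -1})"
      proof
        assume "x = T" then show ?thesis by (intro V.span_base) simp
      next
        assume "x \<in> {\<psi> a n |a n. a \<in> Bset}"
        then have "x \<in> V.span {\<psi> a n |a n. a \<in> Bset}" by (rule V.span_base)
        then have "x \<in> V.span A.LS" using A.span_LS by (rule rev_subsetD)
        then have "x \<in> V.span {Lim \<psi> i m |i m. m \<ge> -1}"
          using A.span_Lim by simp
        then show ?thesis using V.span_mono[of "{Lim \<psi> i m |i m. m \<ge> -1}" "insert T {Lim \<psi> i m |i m. m \<ge> -1}"] by blast
      qed
    qed
  qed simp
  finally show "V.span (insert T {Lim \<psi> i m |i m. m \<ge> -1}) = UNIV" by blast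
next
  fix i j and m n :: int
  assume H: "is_ext_ann_algebra p sc' br' \<psi> T" "m \<ge> -1" "n \<ge> -1"
  interpret A: annrel p sc' br' \<psi> using H(1) unfolding is_ext_ann_algebra_def by (intro annrel.intro) blast
  show "br' (Lim \<psi> i m) (Lim \<psi> j n)
             = sc' ((of_nat j + p) * of_int (m + 1) - (of_nat i + p) * of_int (n + 1))
                   (Lim \<psi> (i + j) (m + n))" using H(2,3) by (rule A.bracket_Lim)
next
  fix i and m :: int
  assume H: "is_ext_ann_algebra p sc' br' \<psi> T" "m \<ge> -1"
  interpret A: annrel p sc' br' \<psi> using H(1) unfolding is_ext_ann_algebra_def by (intro annrel.intro) blast
  interpret V: vector_space sc' by (rule A.vs)
  have T: "br' T (\<psi> (Lb i) k) = sc' (- of_nat k) (\<psi> (Lb i) (k - 1))" for k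
    using H(1) Lb_Bset unfolding is_ext_ann_algebra_def by blast
  show "br' T (Lim \<psi> i m) = sc' (- of_int (m + 1)) (Lim \<psi> i (m - 1))"
  proof (cases "m = -1")
    case True
    then show ?thesis by (simp add: Lim_def T)
  next
    case False
    then have m0: "m \<ge> 0" using H(2) by simp
    then have k: "nat (m + 1) = Suc (nat m)" by simp
    have c: "(of_int (m + 1) :: complex) = of_nat (Suc (nat m))" using m0 by simp
    show ?thesis unfolding Lim_def k T c by simp
  qed
qed

end
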